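(* Let $M>0$, $D\in\mathbb{N}$, $l=2D$, and $c\in\mathbb{R}^D$ with $\|c\|_\infty\le M/2$. Let $H\in\mathbb{R}^{5\times l}$ be the structured embedding matrix whose first row is $(x^1,\dots,x^D,0,\dots,0)$ and second row is zero, with $\|H\|_\infty\le M/2$. Then there is a transformer block $\mathrm{B}$ with $D$ attention heads and a feed-forward layer of depth $3$, with all parameters bounded in absolute value by $O(lM)$, such that $\mathrm{B}(H)$ is the structured embedding matrix whose first row is $(x^1,\dots,x^D,x^1-c^1,\dots,x^D-c^D)$ and whose second row is zero (rows $3$–$5$ unchanged).
   Context: $\sigma(x)=\max(0,x)$. An attention head with $Q,K,V\in\mathbb{R}^{5\times5}$ maps $H=[h_1,\dots,h_l]$ to the matrix whose $i$-th column is $\sum_{k=1}^l\sigma(\langle Qh_i,Kh_k\rangle)Vh_k$; a multi-head attention layer $\mathrm{MHA}$ is a sum of attention heads; a feed-forward layer of depth $L$ is $h\mapsto W_L\sigma(\cdots\sigma(W_1h+b_1)\cdots)+b_L$ applied column-wise; a transformer block is $\mathrm{B}(H)=\mathrm{FFN}(\mathrm{MHA}(H)+H)+\mathrm{MHA}(H)+H$. A structured embedding matrix $H\in\mathbb{R}^{5\times l}$ has $t$-th column with entries $(h_t^3,h_t^4)=\mathcal{I}_t=(\cos(\tfrac{t}{l}\tfrac{\pi}{2}),\sin(\tfrac{t}{l}\tfrac{\pi}{2}))$ and $h_t^5=1$. $\|H\|_\infty$ is the maximal absolute entry. *)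

theory Defs
  imports Complex_Main
begin

text \<open>A 5 x l matrix is a function H :: nat => nat => real, where
  H r t is the entry in row r+1 (r = 0..4) and column t (t = 1..l).
  Vectors in R^n are functions nat => real read on indices 0..n-1;
  matrices with n columns act via mv n.\<close>

definition relu :: "real \<Rightarrow> real" where
  "relu x = max 0 x"

definition mv :: "nat \<Rightarrow> (nat \<Rightarrow> nat \<Rightarrow> real) \<Rightarrow> (nat \<Rightarrow> real) \<Rightarrow> (nat \<Rightarrow> real)" where
  "mv n W v = (\<lambda>i. \<Sum>j<n. W i j * v j)"

definition col :: "(nat \<Rightarrow> nat \<Rightarrow> real) \<Rightarrow> nat \<Rightarrow> (nat \<Rightarrow> real)" where
  "col H t = (\<lambda>r. H r t)"

definition attn_head ::
  "(nat \<Rightarrow> nat \<Rightarrow> real) \<times> (nat \<Rightarrow> nat \<Rightarrow> real) \<times> (nat \<Rightarrow> nat \<Rightarrow> real)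
    \<Rightarrow> nat \<Rightarrow> (nat \<Rightarrow> nat \<Rightarrow> real) \<Rightarrow> (nat \<Rightarrow> nat \<Rightarrow> real)" where
  "attn_head P l H = (case P of (Q, K, V) \<Rightarrow>
     (\<lambda>r i. \<Sum>k=1..l. relu (\<Sum>s<5. mv 5 Q (col H i) s * mv 5 K (col H k) s)
                        * mv 5 V (col H k) r))"

definition mha ::
  "((nat \<Rightarrow> nat \<Rightarrow> real) \<times> (nat \<Rightarrow> nat \<Rightarrow> real) \<times> (nat \<Rightarrow> nat \<Rightarrow> real)) list
    \<Rightarrow> nat \<Rightarrow> (nat \<Rightarrow> nat \<Rightarrow> real) \<Rightarrow> (nat \<Rightarrow> nat \<Rightarrow> real)" where
  "mha heads l H = (\<lambda>r i. \<Sum>P\<leftarrow>heads. attn_head P l H r i)"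

definition ffn3 ::
  "nat \<Rightarrow> nat \<Rightarrow> (nat \<Rightarrow> nat \<Rightarrow> real) \<Rightarrow> (nat \<Rightarrow> real) \<Rightarrow> (nat \<Rightarrow> nat \<Rightarrow> real) \<Rightarrow> (nat \<Rightarrow> real)
    \<Rightarrow> (nat \<Rightarrow> nat \<Rightarrow> real) \<Rightarrow> (nat \<Rightarrow> real) \<Rightarrow> (nat \<Rightarrow> real) \<Rightarrow> (nat \<Rightarrow> real)" where
  "ffn3 n1 n2 W1 b1 W2 b2 W3 b3 v =
     (\<lambda>i. mv n2 W3 (\<lambda>j. relu (mv n1 W2 (\<lambda>k. relu (mv 5 W1 v k + b1 k)) j + b2 j)) i + b3 i)"

definition tblock ::
  "((nat \<Rightarrow> nat \<Rightarrow> real) \<times> (nat \<Rightarrow> nat \<Rightarrow> real) \<times> (nat \<Rightarrow> nat \<Rightarrow> real)) list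
    \<Rightarrow> nat \<Rightarrow> nat \<Rightarrow> (nat \<Rightarrow> nat \<Rightarrow> real) \<Rightarrow> (nat \<Rightarrow> real) \<Rightarrow> (nat \<Rightarrow> nat \<Rightarrow> real) \<Rightarrow> (nat \<Rightarrow> real)
    \<Rightarrow> (nat \<Rightarrow> nat \<Rightarrow> real) \<Rightarrow> (nat \<Rightarrow> real)
    \<Rightarrow> nat \<Rightarrow> (nat \<Rightarrow> nat \<Rightarrow> real) \<Rightarrow> (nat \<Rightarrow> nat \<Rightarrow> real)" where
  "tblock heads n1 n2 W1 b1 W2 b2 W3 b3 l H =
     (let A = (\<lambda>r t. mha heads l H r t + H r t)
      in (\<lambda>r t. ffn3 n1 n2 W1 b1 W2 b2 W3 b3 (col A t) r + A r t))"

definition struct_emb :: "nat \<Rightarrow> (nat \<Rightarrow> real) \<Rightarrow> (nat \<Rightarrow> nat \<Rightarrow> real)" where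
  "struct_emb l y = (\<lambda>r t.
     if r = 0 then y t
     else if r = 1 then 0
     else if r = 2 then cos (real t / real l * (pi / 2))
     else if r = 3 then sin (real t / real l * (pi / 2))
     else 1)"

definition maxnorm :: "nat \<Rightarrow> (nat \<Rightarrow> nat \<Rightarrow> real) \<Rightarrow> real" where
  "maxnorm l H = Max ({0} \<union> {\<bar>H r t\<bar> | r t. r < 5 \<and> t \<in> {1..l}})"

definition params_bounded ::
  "real \<Rightarrow> ((nat \<Rightarrow> nat \<Rightarrow> real) \<times> (nat \<Rightarrow> nat \<Rightarrow> real) \<times> (nat \<Rightarrow> nat \<Rightarrow> real)) list
    \<Rightarrow> nat \<Rightarrow> nat \<Rightarrow> (nat \<Rightarrow> nat \<Rightarrow> real) \<Rightarrow> (nat \<Rightarrow> real) \<Rightarrow> (nat \<Rightarrow> nat \<Rightarrow> real) \<Rightarrow> (nat \<Rightarrow> real)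
    \<Rightarrow> (nat \<Rightarrow> nat \<Rightarrow> real) \<Rightarrow> (nat \<Rightarrow> real) \<Rightarrow> bool" where
  "params_bounded B heads n1 n2 W1 b1 W2 b2 W3 b3 \<longleftrightarrow>
     (\<forall>(Q, K, V) \<in> set heads. \<forall>r<5. \<forall>s<5. \<bar>Q r s\<bar> \<le> B \<and> \<bar>K r s\<bar> \<le> B \<and> \<bar>V r s\<bar> \<le> B) \<and>
     (\<forall>i<n1. (\<forall>j<5. \<bar>W1 i j\<bar> \<le> B) \<and> \<bar>b1 i\<bar> \<le> B) \<and>
     (\<forall>i<n2. (\<forall>j<n1. \<bar>W2 i j\<bar> \<le> B) \<and> \<bar>b2 i\<bar> \<le> B) \<and>
     (\<forall>i<5. (\<forall>j<n2. \<bar>W3 i j\<bar> \<le> B) \<and> \<bar>b3 i\<bar> \<le> B)"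

end

theory Submission imports Defs begin

definition th :: "nat \<Rightarrow> nat \<Rightarrow> real" where "th l t = real t / real l * (pi/2)"

lemma cos_gap:
  assumes "t \<in> {1..l}" "j \<in> {1..l}" "t \<noteq> j"
  shows "cos (th l t - th l j) \<le> cos (pi / (2 * real l))"
proof -
  have l: "real l \<ge> 1" using assms by auto
  have eq: "th l t - th l j = (real t - real j) * (pi / (2 * real l))"
    by (simp add: th_def field_simps diff_divide_distrib[symmetric])
  have "\<bar>real t - real j\<bar> \<ge> 1" using assms(3) by (cases "t < j") auto
  moreover have "\<bar>real t - real j\<bar> \<le> real l" using assms(1,2) by auto
  ultimately have a: "pi / (2 * real l) \<le> \<bar>th l t - th l j\<bar>" "\<bar>th l t - th l j\<bar> \<le> pi"
    unfolding eq abs_mult using l pi_gt_zero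
    by (simp_all add: field_simps)
  have "cos \<bar>th l t - th l j\<bar> \<le> cos (pi / (2 * real l))"
    using a l by (subst cos_mono_le_eq) (auto simp: field_simps)
  thus ?thesis by simp
qed

lemma eps_pos: "l \<ge> 1 \<Longrightarrow> cos (pi / (2 * real l)) < 1"
proof -
  assume "l \<ge> 1"
  hence "0 < pi / (2 * real l)" "pi / (2 * real l) \<le> pi" by (auto simp: field_simps)
  hence "cos (pi / (2 * real l)) < cos 0" by (intro cos_monotone_0_pi) auto
  thus ?thesis by simp
qed

lemma eps_le: "l \<ge> 1 \<Longrightarrow> cos (pi / (2 * real l)) \<ge> 0"
  using pi_gt_zero by (intro cos_ge_zero) (auto simp: field_simps intro: order_trans[of _ 0])

definition Qm :: "real \<Rightarrow> real \<Rightarrow> nat \<Rightarrow> nat \<Rightarrow> real" where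
 "Qm M p r s = (if r = 0 then (if s = 2 then M*cos p else if s = 3 then M * sin p else if s = 4 then -M else 0)
     else if r = 1 then (if s = 4 then M else 0) else 0)"
definition Km :: "real \<Rightarrow> real \<Rightarrow> real \<Rightarrow> nat \<Rightarrow> nat \<Rightarrow> real" where
 "Km M p e r s = (if r = 0 then (if s = 4 then M else 0)
     else if r = 1 then (if s = 2 then M*cos p else if s = 3 then M*sin p else if s = 4 then M*(e-1) else 0) else 0)"
definition Vm :: "real \<Rightarrow> real \<Rightarrow> nat \<Rightarrow> nat \<Rightarrow> real" where
 "Vm b cc r s = (if r = 1 then (if s = 0 then b else if s = 4 then -b*cc else 0) else 0)"

lemma sum5: "(\<Sum>s<(5::nat). f s) = f 0 + f 1 + f 2 + f 3 + (f 4 :: real)"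
  by (simp add: eval_nat_numeral)

lemma score:
  "(\<Sum>s<5. mv 5 (Qm M p) (col (struct_emb l y) i) s * mv 5 (Km M q e) (col (struct_emb l y) j) s)
   = M*M*((cos (th l i - p) - 1) + (cos (th l j - q) - 1 + e))"
  by (simp add: sum5 mv_def col_def struct_emb_def Qm_def Km_def th_def cos_diff algebra_simps)

lemma valuev:
  "mv 5 (Vm b cc) (col (struct_emb l y) j) r = (if r = 1 then b * (y j - cc) else 0)"
  by (simp add: sum5 mv_def col_def struct_emb_def Vm_def algebra_simps)

lemma term_sel:
  assumes i: "i \<in> {1..2*D}" and j: "j \<in> {1..2*D}" and k: "k \<in> {1..D}" and M: "M > 0"
  defines "e \<equiv> 1 - cos (pi / (2 * real (2*D)))"
  shows "relu (M*M*((cos (th (2*D) i - th (2*D) (D+k)) - 1) + (cos (th (2*D) j - th (2*D) k) - 1 + e)))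
     = (if i = D+k \<and> j = k then M*M*e else 0)"
proof (cases "i = D+k \<and> j = k")
  case True
  have "e > 0" unfolding e_def using eps_pos[of "2*D"] k by auto
  then show ?thesis using True M by (simp add: relu_def)
next
  case False
  have le1: "cos (th (2*D) i - th (2*D) (D+k)) \<le> 1" "cos (th (2*D) j - th (2*D) k) \<le> 1" by auto
  have "(cos (th (2*D) i - th (2*D) (D+k)) - 1) + (cos (th (2*D) j - th (2*D) k) - 1 + e) \<le> 0"
  proof (cases "i = D+k")
    case True
    with False have "j \<noteq> k" by auto
    from cos_gap[OF j _ this] k have "cos (th (2*D) j - th (2*D) k) \<le> cos (pi / (2 * real (2*D)))" by auto
    then show ?thesis using le1 unfolding e_def by linarith
  next
    case False
    from cos_gap[OF i _ this] k have "cos (th (2*D) i - th (2*D) (D+k)) \<le> cos (pi / (2 * real (2*D)))" by auto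
    then show ?thesis using le1 unfolding e_def by linarith
  qed
  hence "M*M*((cos (th (2*D) i - th (2*D) (D+k)) - 1) + (cos (th (2*D) j - th (2*D) k) - 1 + e)) \<le> 0"
    using M by (simp add: mult_nonneg_nonpos)
  then show ?thesis using False unfolding relu_def by (simp only: if_False max_absorb1)
qed

definition W1f :: "real \<Rightarrow> nat \<Rightarrow> nat \<Rightarrow> real" where
  "W1f B k j = (if j = 1 then (if k = 0 then B else -B) else 0)"
definition W2f :: "real \<Rightarrow> nat \<Rightarrow> nat \<Rightarrow> nat \<Rightarrow> real" where
  "W2f B N i k = (if i < N then (if k = 0 then B else 0) else (if k = 1 then B else 0))"
definition W3f :: "real \<Rightarrow> real \<Rightarrow> nat \<Rightarrow> nat \<Rightarrow> nat \<Rightarrow> real" where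
  "W3f g h N r i = (if r = 0 then (if i < N then g else -g) else if r = 1 then (if i < N then -h else h) else 0)"

lemma ffn_eval:
  assumes B: "B \<ge> 0"
  shows "ffn3 2 (2*N) (W1f B) (\<lambda>_. 0) (W2f B N) (\<lambda>_. 0) (W3f g h N) (\<lambda>_. 0) v r
     = (if r = 0 then real N * g * B * B * v 1 else if r = 1 then - real N * h * B * B * v 1 else 0)"
proof -
  define y0 where "y0 = relu (B * v 1)"
  define y1 where "y1 = relu (- (B * v 1))"
  have y: "y0 \<ge> 0" "y1 \<ge> 0" "y0 - y1 = B * v 1" unfolding y0_def y1_def relu_def by auto
  have L1: "(\<lambda>k. relu (mv 5 (W1f B) v k + 0)) = (\<lambda>k. if k = 0 then y0 else y1)"
    by (rule ext) (simp add: mv_def W1f_def sum5 y0_def y1_def)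
  have L2: "(\<lambda>j. relu (mv 2 (W2f B N) (\<lambda>k. if k = 0 then y0 else y1) j + 0))
      = (\<lambda>j. if j < N then B * y0 else B * y1)"
    using y B by (intro ext) (simp add: mv_def W2f_def eval_nat_numeral relu_def)
  have split: "(\<Sum>i<2*N. f i) = (\<Sum>i\<in>{0..<N}. f i) + (\<Sum>i\<in>{N..<2*N}. f i)" for f :: "nat \<Rightarrow> real"
    by (simp add: atLeast0LessThan[symmetric] sum.atLeastLessThan_concat)
  have S: "mv (2*N) (W3f g h N) (\<lambda>j. if j < N then B * y0 else B * y1) r
     = (if r = 0 then real N * g * B * (y0 - y1) else if r = 1 then - real N * h * B * (y0 - y1) else 0)"
    unfolding mv_def split by (simp add: W3f_def algebra_simps)
  show ?thesis unfolding ffn3_def L1 L2 S using y by (simp add: algebra_simps)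
qed

definition hdk :: "nat \<Rightarrow> real \<Rightarrow> real \<Rightarrow> real \<Rightarrow> (nat \<Rightarrow> real) \<Rightarrow> nat \<Rightarrow>
   (nat \<Rightarrow> nat \<Rightarrow> real) \<times> (nat \<Rightarrow> nat \<Rightarrow> real) \<times> (nat \<Rightarrow> nat \<Rightarrow> real)" where
  "hdk D M e b c k = (Qm M (th (2*D) (D+k)), Km M (th (2*D) k) e, Vm b (c k))"

lemma attn_k:
  assumes i: "i \<in> {1..2*D}" and k: "k \<in> {1..D}" and M: "M > 0"
  defines "e \<equiv> 1 - cos (pi / (2 * real (2*D)))"
  shows "attn_head (hdk D M e b c k) (2*D) (struct_emb (2*D) (\<lambda>t. if t \<le> D then x t else 0)) r i
     = (if r = 1 \<and> i = D+k then M*M*e*b*(x k - c k) else 0)"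
proof -
  let ?y = "(\<lambda>t. if t \<le> D then x t else 0)"
  have "attn_head (hdk D M e b c k) (2*D) (struct_emb (2*D) ?y) r i
     = (\<Sum>j=1..2*D. (if i = D+k \<and> j = k then M*M*e else 0) * (if r = 1 then b * (?y j - c k) else 0))"
    unfolding attn_head_def hdk_def prod.case score valuev
    by (intro sum.cong refl, subst term_sel[OF i _ k M, unfolded e_def[symmetric]]) auto
  also have "\<dots> = (\<Sum>j=1..2*D. if j = k then (if i = D+k \<and> r = 1 then M*M*e*b*(x k - c k) else 0) else 0)"
    using k by (intro sum.cong refl) auto
  also have "\<dots> = (if r = 1 \<and> i = D+k then M*M*e*b*(x k - c k) else 0)"
    using k by (subst sum.delta) auto
  finally show ?thesis .
qed

lemma mha_eval:
  assumes i: "i \<in> {1..2*D}" and M: "M > 0"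
  defines "e \<equiv> 1 - cos (pi / (2 * real (2*D)))"
  shows "mha (map (hdk D M e b c) [1..<D+1]) (2*D) (struct_emb (2*D) (\<lambda>t. if t \<le> D then x t else 0)) r i
     = (if r = 1 \<and> D < i then M*M*e*b*(x (i-D) - c (i-D)) else 0)"
proof -
  have "mha (map (hdk D M e b c) [1..<D+1]) (2*D) (struct_emb (2*D) (\<lambda>t. if t \<le> D then x t else 0)) r i
    = (\<Sum>k\<in>{1..<D+1}. attn_head (hdk D M e b c k) (2*D) (struct_emb (2*D) (\<lambda>t. if t \<le> D then x t else 0)) r i)"
    unfolding mha_def map_map o_def interv_sum_list_conv_sum_set_nat set_upt ..
  also have "\<dots> = (\<Sum>k\<in>{1..<D+1}. if k = i - D then (if r = 1 \<and> D < i then M*M*e*b*(x (i-D) - c (i-D)) else 0) else 0)"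
    using i by (intro sum.cong refl, subst attn_k[OF i _ M, unfolded e_def[symmetric]]) auto
  also have "\<dots> = (if r = 1 \<and> D < i then M*M*e*b*(x (i-D) - c (i-D)) else 0)"
    using i by (subst sum.delta) auto
  finally show ?thesis .
qed

lemma Qm_bd: "M \<ge> 0 \<Longrightarrow> \<bar>Qm M p r s\<bar> \<le> M"
  unfolding Qm_def by (auto simp: abs_mult intro: mult_left_le[of "\<bar>cos p\<bar>" M, simplified] mult_left_le[of "\<bar>sin p\<bar>" M, simplified])

lemma Km_bd: "M \<ge> 0 \<Longrightarrow> 0 \<le> e \<Longrightarrow> e \<le> 1 \<Longrightarrow> \<bar>Km M p e r s\<bar> \<le> M"
  unfolding Km_def by (auto simp: abs_mult intro: mult_left_le[of "\<bar>cos p\<bar>" M, simplified] mult_left_le[of "\<bar>sin p\<bar>" M, simplified] mult_left_le[of "1 - e" M, simplified])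

lemma Vm_bd: "0 \<le> b \<Longrightarrow> b \<le> B \<Longrightarrow> b * \<bar>cc\<bar> \<le> B \<Longrightarrow> \<bar>Vm b cc r s\<bar> \<le> B"
  unfolding Vm_def by (auto simp: abs_mult)

theorem lemma5:
  shows "\<exists>C>0. \<forall>(M::real) (D::nat) (c::nat \<Rightarrow> real). M > 0 \<longrightarrow>
     (\<forall>k\<in>{1..D}. \<bar>c k\<bar> \<le> M / 2) \<longrightarrow>
     (\<exists>heads n1 n2 W1 b1 W2 b2 W3 b3.
        length heads = D \<and>
        params_bounded (C * real (2 * D) * M) heads n1 n2 W1 b1 W2 b2 W3 b3 \<and>
        (\<forall>x::nat \<Rightarrow> real.
           maxnorm (2 * D) (struct_emb (2 * D) (\<lambda>t. if t \<le> D then x t else 0)) \<le> M / 2 \<longrightarrow>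
           (\<forall>r<5. \<forall>t\<in>{1..2 * D}.
              tblock heads n1 n2 W1 b1 W2 b2 W3 b3 (2 * D)
                 (struct_emb (2 * D) (\<lambda>t. if t \<le> D then x t else 0)) r t
              = struct_emb (2 * D) (\<lambda>t. if t \<le> D then x t else x (t - D) - c (t - D)) r t)))"
proof (intro exI[of _ 1] conjI allI impI)
  fix M :: real and D :: nat and c :: "nat \<Rightarrow> real"
  assume M: "M > 0" and cb: "\<forall>k\<in>{1..D}. \<bar>c k\<bar> \<le> M / 2"
  show "\<exists>heads n1 n2 W1 b1 W2 b2 W3 b3.
        length heads = D \<and>
        params_bounded (1 * real (2 * D) * M) heads n1 n2 W1 b1 W2 b2 W3 b3 \<and>
        (\<forall>x::nat \<Rightarrow> real.
           maxnorm (2 * D) (struct_emb (2 * D) (\<lambda>t. if t \<le> D then x t else 0)) \<le> M / 2 \<longrightarrow>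
           (\<forall>r<5. \<forall>t\<in>{1..2 * D}.
              tblock heads n1 n2 W1 b1 W2 b2 W3 b3 (2 * D)
                 (struct_emb (2 * D) (\<lambda>t. if t \<le> D then x t else 0)) r t
              = struct_emb (2 * D) (\<lambda>t. if t \<le> D then x t else x (t - D) - c (t - D)) r t))"
  proof (cases "D = 0")
    case True
    show ?thesis
      by (rule exI[of _ "[]"], rule exI[of _ 0], rule exI[of _ 0], rule exI[of _ "\<lambda>_ _. 0"],
          rule exI[of _ "\<lambda>_. 0"], rule exI[of _ "\<lambda>_ _. 0"], rule exI[of _ "\<lambda>_. 0"],
          rule exI[of _ "\<lambda>_ _. 0"], rule exI[of _ "\<lambda>_. 0"]) (simp add: True params_bounded_def)
  next
    case False
    hence D1: "D \<ge> 1" by simp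
    define B where "B = real (2 * D) * M"
    define e where "e = 1 - cos (pi / (2 * real (2*D)))"
    define b where "b = min 1 M"
    define s where "s = M*M*e*b"
    define G where "G = 1 / s"
    define N where "N = nat \<lceil>(G+1)/B^3\<rceil>"
    define g where "g = G / (real N * B * B)"
    define h where "h = 1 / (real N * B * B)"
    have MB: "M \<le> B" unfolding B_def using D1 M by (simp add: mult_le_cancel_right1)
    have Bpos: "B > 0" using M D1 unfolding B_def by simp
    have e01: "0 < e" "e \<le> 1" unfolding e_def using eps_pos[of "2*D"] eps_le[of "2*D"] D1 by auto
    have b: "0 < b" "b \<le> 1" "b \<le> M" unfolding b_def using M by auto
    have spos: "s > 0" unfolding s_def using M e01 b by simp
    have Gpos: "G > 0" unfolding G_def using spos by simp
    have "real N \<ge> (G+1)/B^3" unfolding N_def by (rule real_nat_ceiling_ge)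
    hence NB: "real N * B^3 \<ge> G + 1" using Bpos by (simp add: field_simps)
    hence Npos: "real N > 0" using Gpos Bpos
      by (smt (verit) mult_nonpos_nonneg of_nat_0_le_iff zero_less_power)
    have NgBB: "real N * g * B * B = G" unfolding g_def using Npos Bpos by (simp add: field_simps)
    have NhBB: "real N * h * B * B = 1" unfolding h_def using Npos Bpos by (simp add: field_simps)
    have gB: "g \<le> B" unfolding g_def using NB Npos Bpos Gpos
      by (simp add: field_simps power3_eq_cube)
    have hB: "h \<le> B" unfolding h_def using NB Npos Bpos Gpos
      by (simp add: field_simps power3_eq_cube)
    have g0: "g \<ge> 0" "h \<ge> 0" unfolding g_def h_def using Npos Bpos Gpos by auto
    have Gs: "G * s = 1" unfolding G_def using spos by simp
    show ?thesis
    proof (rule exI[of _ "map (hdk D M e b c) [1..<D+1]"], rule exI[of _ 2], rule exI[of _ "2*N"],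
          rule exI[of _ "W1f B"], rule exI[of _ "\<lambda>_. 0"], rule exI[of _ "W2f B N"], rule exI[of _ "\<lambda>_. 0"],
          rule exI[of _ "W3f g h N"], rule exI[of _ "\<lambda>_. 0"], intro conjI allI impI ballI)
      show "length (map (hdk D M e b c) [1..<D + 1]) = D" by simp
    next
      show "params_bounded (1 * real (2 * D) * M) (map (hdk D M e b c) [1..<D + 1]) 2 (2 * N) (W1f B) (\<lambda>_. 0)
        (W2f B N) (\<lambda>_. 0) (W3f g h N) (\<lambda>_. 0)"
        unfolding params_bounded_def B_def[symmetric] mult_1
      proof (intro conjI)
        show "\<forall>(Q, K, V)\<in>set (map (hdk D M e b c) [1..<D + 1]). \<forall>r<5. \<forall>s<5. \<bar>Q r s\<bar> \<le> B \<and> \<bar>K r s\<bar> \<le> B \<and> \<bar>V r s\<bar> \<le> B"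
        proof -
          have all: "\<bar>Qm M (th (2 * D) (D + k)) r s'\<bar> \<le> B \<and> \<bar>Km M (th (2 * D) k) e r s'\<bar> \<le> B \<and> \<bar>Vm b (c k) r s'\<bar> \<le> B"
            if k: "k \<in> {1..D}" for k r s'
          proof -
            have ck: "b * \<bar>c k\<bar> \<le> B"
            proof -
              have "b * \<bar>c k\<bar> \<le> 1 * (M/2)" using cb k b by (intro mult_mono) auto
              thus ?thesis using MB M by simp
            qed
            show ?thesis
              using Qm_bd[of M] Km_bd[of M e] Vm_bd[OF _ _ ck] M e01 b MB by (meson less_imp_le order_trans)
          qed
          show ?thesis using all by (auto simp: hdk_def)
        qed
      qed (insert Bpos gB hB g0, auto simp: W1f_def W2f_def W3f_def)
    next
      fix x :: "nat \<Rightarrow> real" and r t :: nat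
      assume r: "r < 5" and t: "t \<in> {1..2*D}"
      let ?H = "struct_emb (2 * D) (\<lambda>t. if t \<le> D then x t else 0)"
      have A1: "mha (map (hdk D M e b c) [1..<D + 1]) (2 * D) ?H 1 t + ?H 1 t
          = (if D < t then s*(x (t-D) - c (t-D)) else 0)"
        using mha_eval[OF t M, of b c x 1] unfolding e_def[symmetric] s_def
        by (simp add: struct_emb_def)
      show "tblock (map (hdk D M e b c) [1..<D + 1]) 2 (2 * N) (W1f B) (\<lambda>_. 0) (W2f B N) (\<lambda>_. 0) (W3f g h N) (\<lambda>_. 0)
          (2 * D) ?H r t = struct_emb (2 * D) (\<lambda>t. if t \<le> D then x t else x (t - D) - c (t - D)) r t"
        unfolding tblock_def Let_def ffn_eval[OF less_imp_le[OF Bpos]]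
        unfolding col_def A1 mha_eval[OF t M, unfolded e_def[symmetric] s_def[symmetric]]
        using NgBB NhBB Gs r Gs[unfolded s_def NgBB[symmetric]]
        by (cases "t \<le> D") (auto simp: struct_emb_def mult.assoc[symmetric])
    qed
  qed
qed simp

end
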